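(* Let $x>0$ and $p\in\mathbb{R}$. (i) If $0\le p\le \frac12$, then $\hat{G}_p(x,1)\ge K(x)^{-p(1-p)}W_p(x,1)$. (ii) If $p\le 0$ or $p\ge 1$, then $\hat{G}_p(x,1)\le K(x)^{-p(1-p)}W_p(x,1)$.
   Context: For $x>0$, $x\neq1$ and $p\neq 0$: $\hat{G}_p(x,1)=\frac{p\,x^{p/2}(x-1)}{x^p-1}$, with $\hat G_p(1,1)=1$ and $\hat{G}_0(x,1)=\frac{x-1}{\log x}$ (limiting value). $K(x)=\frac{(x+1)^2}{4x}$. The Wigner--Yanase--Dyson function for $p\in\mathbb{R}\setminus\{0,1\}$, $x\ne1$ is $W_p(x,1)=\frac{p(1-p)(x-1)^2}{(x^p-1)(x^{1-p}-1)}$, with $W_p(1,1)=1$ and $W_0(x,1)=W_1(x,1)=\frac{x-1}{\log x}$ (limiting value). *)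

theory Defs
  imports "HOL-Analysis.Analysis"
begin

definition Ghat :: "real \<Rightarrow> real \<Rightarrow> real" where
  "Ghat p x = (if x = 1 then 1
     else if p = 0 then (x - 1) / ln x
     else p * x powr (p / 2) * (x - 1) / (x powr p - 1))"

definition K :: "real \<Rightarrow> real" where
  "K x = (x + 1)^2 / (4 * x)"

definition W :: "real \<Rightarrow> real \<Rightarrow> real" where
  "W p x = (if x = 1 then 1
     else if p = 0 \<or> p = 1 then (x - 1) / ln x
     else p * (1 - p) * (x - 1)^2 / ((x powr p - 1) * (x powr (1 - p) - 1)))"

end

theory Submission imports Defs begin

definition SS :: "real \<Rightarrow> real" where "SS u = exp u - exp (-u)"
definition CC :: "real \<Rightarrow> real" where "CC u = exp u + exp (-u)"

lemma SS_deriv: "(SS has_real_derivative CC u) (at u)"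
  unfolding SS_def CC_def by (auto intro!: derivative_eq_intros)
lemma CC_deriv: "(CC has_real_derivative SS u) (at u)"
  unfolding SS_def CC_def by (auto intro!: derivative_eq_intros)

lemma SS_odd: "SS (-u) = - SS u" by (simp add: SS_def)
lemma CC_even: "CC (-u) = CC u" by (simp add: CC_def)
lemma CC_SS: "CC u ^ 2 - SS u ^ 2 = 4"
  by (simp add: SS_def CC_def power2_eq_square algebra_simps flip: exp_add)

lemma SS_pos: "u > 0 \<Longrightarrow> SS u > 0" by (simp add: SS_def)
lemma SS_neg: "u < 0 \<Longrightarrow> SS u < 0" by (simp add: SS_def)
lemma CC_ge2: "CC u \<ge> 2"
proof -
  have "exp u + inverse (exp u) \<ge> 2"
  proof -
    have "(exp u - 1)^2 \<ge> 0" by simp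
    hence "exp u * exp u + 1 \<ge> 2 * exp u" by (simp add: power2_eq_square algebra_simps)
    thus ?thesis by (simp add: field_simps)
  qed
  thus ?thesis by (simp add: CC_def exp_minus)
qed

lemma CC_mono: assumes "0 \<le> a" "a \<le> b" shows "CC a \<le> CC b"
proof -
  define A where "A = exp a" define B where "B = exp b"
  have A: "1 \<le> A" "A \<le> B" using assms by (auto simp: A_def B_def)
  have "B + 1/B - A - 1/A = (B - A) * (1 - 1/(A*B))" using A by (simp add: field_simps)
  also have "\<dots> \<ge> 0" using A by (intro mult_nonneg_nonneg) (auto simp: field_simps intro: one_le_mult_iff[THEN iffD2] order_trans[OF _ mult_mono[of 1 A 1 B]])
  finally show ?thesis by (simp add: CC_def A_def B_def exp_minus field_simps)
qed

lemma SS_ge: assumes "v \<ge> 0" shows "SS v \<ge> 2 * v"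
proof -
  have "(\<lambda>v. SS v - 2 * v) 0 \<le> (\<lambda>v. SS v - 2 * v) v"
    apply (rule DERIV_nonneg_imp_nondecreasing[OF assms])
    apply (rule exI[of _ "CC _ - 2"])
    using CC_ge2 by (auto intro!: derivative_eq_intros SS_deriv)
  thus ?thesis by (simp add: SS_def)
qed

lemma SS_le: assumes "u \<ge> 0" shows "SS u \<le> u * CC u"
proof -
  have "(\<lambda>v. v * CC v - SS v) 0 \<le> (\<lambda>v. v * CC v - SS v) u"
    apply (rule DERIV_nonneg_imp_nondecreasing[OF assms])
    subgoal for x
    apply (rule exI[of _ "x * SS x"])
    using SS_pos[of x] by (auto intro!: derivative_eq_intros SS_deriv CC_deriv simp: less_eq_real_def)
    done
  thus ?thesis by (simp add: SS_def CC_def)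
qed

lemma SS_small: assumes "s \<ge> 0" "0 \<le> r" "r \<le> 1" shows "SS (r * s) \<le> r * SS s"
proof -
  have "(\<lambda>v. r * SS v - SS (r * v)) 0 \<le> (\<lambda>v. r * SS v - SS (r * v)) s"
    apply (rule DERIV_nonneg_imp_nondecreasing[OF assms(1)])
    subgoal for x
    apply (rule exI[of _ "r * CC x - r * CC (r * x)"])
    using CC_mono[of "r*x" x] assms mult_left_le_one_le[of x r]
    by (auto intro!: derivative_eq_intros SS_deriv CC_deriv DERIV_chain2[OF SS_deriv] mult_left_mono simp: algebra_simps)
    done
  thus ?thesis by (simp add: SS_def)
qed

lemma CC_quad: "CC s \<ge> 2 + s^2"
proof -
  have "CC s - 2 = SS (s/2) ^ 2"
    by (simp add: SS_def CC_def power2_eq_square algebra_simps flip: exp_add)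
  moreover have "SS (\<bar>s\<bar>/2) ^2 \<ge> s^2"
  proof -
    have "SS (\<bar>s\<bar>/2) \<ge> \<bar>s\<bar>" using SS_ge[of "\<bar>s\<bar>/2"] by simp
    hence "\<bar>s\<bar>^2 \<le> SS (\<bar>s\<bar>/2) ^2" by (intro power_mono) auto
    thus ?thesis by simp
  qed
  moreover have "SS (\<bar>s\<bar>/2) ^2 = SS (s/2)^2"
    by (cases "s \<ge> 0") (auto simp: SS_odd)
  ultimately show ?thesis by linarith
qed

lemma ln_bound: assumes "s > 0" shows "min (s^2) 4 \<le> 4 * ln (CC s / 2)"
proof (cases "s^2 \<le> 4")
  case True
  have "exp (s^2/4) \<le> 1 + s^2/4 + (s^2/4)^2" by (rule exp_bound) (use True in auto)
  also have "\<dots> \<le> 1 + s^2/2" 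
  proof -
    have "s^2 * s^2 \<le> 4 * s^2" using True by (intro mult_right_mono) auto
    thus ?thesis by (simp add: power2_eq_square field_simps)
  qed
  also have "\<dots> \<le> CC s / 2" using CC_quad[of s] by simp
  finally have "s^2/4 \<le> ln (CC s / 2)" using CC_ge2[of s]
    by (subst ln_ge_iff) auto
  thus ?thesis by simp
next
  case False
  have "exp (1::real) \<le> 3" using exp_le by simp
  also have "3 \<le> CC s / 2" using CC_quad[of s] False by simp
  finally have "1 \<le> ln (CC s / 2)" using CC_ge2[of s]
    by (subst ln_ge_iff) auto
  thus ?thesis by simp
qed

lemma G2_le: assumes "s > 0" "q \<ge> 1/2"
  shows "1/q^2 - 4 * s^2 / (SS (q * s))^2 - 4 * ln (CC s / 2) \<le> 0"
proof -
  define u where "u = q * s"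
  have u: "u > 0" using assms by (simp add: u_def)
  have S: "SS u > 0" using SS_pos[OF u] .
  have a: "1/q^2 - 4 * s^2 / (SS (q * s))^2 \<le> 4"
  proof -
    have "(1/2)^2 \<le> q^2" using assms by (intro power_mono) auto
    hence "1/q^2 \<le> 4" using assms by (simp add: field_simps)
    moreover have "4 * s^2 / (SS (q * s))^2 \<ge> 0" by simp
    ultimately show ?thesis by linarith
  qed
  have b: "1/q^2 - 4 * s^2 / (SS (q * s))^2 \<le> s^2"
  proof -
    have le: "SS u \<le> u * CC u" using SS_le u by simp
    hence "SS u ^2 \<le> (u * CC u)^2" using S by (intro power_mono) auto
    also have "\<dots> = u^2 * (SS u^2 + 4)" using CC_SS[of u] by (simp add: power_mult_distrib)
    finally have *: "SS u^2 - 4 * u^2 \<le> u^2 * SS u ^2" by (simp add: algebra_simps)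
    have "1/u^2 - 4/SS u^2 = (SS u^2 - 4 * u^2) / (u^2 * SS u^2)" using u S by (simp add: field_simps)
    also have "\<dots> \<le> 1" using * u S by (simp add: divide_le_eq_1)
    finally have "1/u^2 - 4/SS u^2 \<le> 1" .
    hence "s^2 * (1/u^2 - 4/SS u^2) \<le> s^2" by (simp add: mult_left_le)
    moreover have "s^2 * (1/u^2 - 4/SS u^2) = 1/q^2 - 4 * s^2 / (SS (q * s))^2"
      using assms by (simp add: u_def field_simps power2_eq_square)
    ultimately show ?thesis by simp
  qed
  show ?thesis using a b ln_bound[OF assms(1)] by linarith
qed

lemma lin_deriv: "((\<lambda>q::real. q * s) has_real_derivative s) (at q)"
  by (auto intro!: derivative_eq_intros)

lemma SSq_deriv: "((\<lambda>q. SS (q * s)) has_real_derivative CC (q * s) * s) (at q)"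
  using DERIV_chain2[OF SS_deriv lin_deriv] by simp

lemma CCq_deriv: "((\<lambda>q. CC (q * s)) has_real_derivative SS (q * s) * s) (at q)"
  using DERIV_chain2[OF CC_deriv lin_deriv] by simp

lemma G1_deriv: assumes "q > 0" "SS (q * s) > 0"
  shows "((\<lambda>q. ln (SS (q * s)) - ln q - ln (SS s) - 2*q*(q-1)*ln (CC s / 2)) has_real_derivative
     s * CC(q * s)/SS(q * s) - 1/q - (4*q-2)*ln (CC s / 2)) (at q)"
proof -
  have a: "((\<lambda>q. ln (SS (q * s))) has_real_derivative 1 / SS (q * s) * (CC (q * s) * s)) (at q)"
    using DERIV_chain2[OF DERIV_ln_divide[OF assms(2)] SSq_deriv] .
  have b: "((\<lambda>q. ln q) has_real_derivative 1/q) (at q)" using DERIV_ln_divide[OF assms(1)] .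
  have c0: "((\<lambda>q. 2*q*(q-1)) has_real_derivative 4*q-2) (at q)"
    by (auto intro!: derivative_eq_intros simp: algebra_simps)
  have c: "((\<lambda>q. 2*q*(q-1)*ln (CC s / 2)) has_real_derivative (4*q-2)*ln (CC s / 2)) (at q)"
    using DERIV_cmult_right[OF c0, of "ln (CC s / 2)"] .
  have "((\<lambda>q. ln (SS (q * s)) - ln q - ln (SS s) - 2*q*(q-1)*ln (CC s / 2)) has_real_derivative
     1 / SS (q * s) * (CC (q * s) * s) - 1/q - 0 - (4*q-2)*ln (CC s / 2)) (at q)"
    by (intro DERIV_diff a b c DERIV_const)
  thus ?thesis by (simp add: mult.commute)
qed

lemma G2_deriv: assumes "q > 0" "SS (q * s) > 0"
  shows "((\<lambda>q. s * CC(q * s)/SS(q * s) - 1/q - (4*q-2)*ln (CC s / 2)) has_real_derivative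
     1/q^2 - 4 * s^2 / (SS (q * s))^2 - 4 * ln (CC s / 2)) (at q)"
proof -
  have a: "((\<lambda>q. s * CC(q * s)/SS(q * s)) has_real_derivative
      (s * (SS (q * s) * s) * SS (q * s) - s * CC (q * s) * (CC (q * s) * s)) / (SS (q * s) * SS (q * s))) (at q)"
    using DERIV_divide[OF DERIV_cmult[OF CCq_deriv, of s] SSq_deriv] assms by simp
  have b: "((\<lambda>q. 1/q) has_real_derivative - (1/q^2)) (at q)"
    using DERIV_inverse[of q] assms by (simp add: inverse_eq_divide power2_eq_square)
  have c0: "((\<lambda>q. 4*q-2) has_real_derivative 4) (at q)"
    by (auto intro!: derivative_eq_intros simp: algebra_simps)
  have c: "((\<lambda>q. (4*q-2)*ln (CC s / 2)) has_real_derivative 4*ln (CC s / 2)) (at q)"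
    using DERIV_cmult_right[OF c0, of "ln (CC s / 2)"] .
  have d: "((\<lambda>q. s * CC(q * s)/SS(q * s) - 1/q - (4*q-2)*ln (CC s / 2)) has_real_derivative
     (s * (SS (q * s) * s) * SS (q * s) - s * CC (q * s) * (CC (q * s) * s)) / (SS (q * s) * SS (q * s))
      - (- (1/q^2)) - 4*ln (CC s / 2)) (at q)"
    by (intro DERIV_diff a b c)
  have e: "(s * (SS (q * s) * s) * SS (q * s) - s * CC (q * s) * (CC (q * s) * s)) / (SS (q * s) * SS (q * s))
       = - (4 * s^2 / (SS (q * s))^2)"
  proof -
    have "s * (SS (q * s) * s) * SS (q * s) - s * CC (q * s) * (CC (q * s) * s)
        = - (s^2) * (CC (q * s)^2 - SS (q * s)^2)" by (simp add: power2_eq_square algebra_simps)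
    also have "\<dots> = - 4 * (s^2)" using CC_SS[of "q * s"] by simp
    finally show ?thesis by (simp add: power2_eq_square)
  qed
  show ?thesis using d unfolding e by simp
qed

lemma G_concave: assumes "s > 0"
  shows "concave_on {1/2..} (\<lambda>q. ln (SS (q * s)) - ln q - ln (SS s) - 2*q*(q-1)*ln (CC s / 2))"
proof (rule f''_le0_imp_concave[where f' = "\<lambda>q. s * CC(q * s)/SS(q * s) - 1/q - (4*q-2)*ln (CC s / 2)"
        and f'' = "\<lambda>q. 1/q^2 - 4 * s^2 / (SS (q * s))^2 - 4 * ln (CC s / 2)"])
  show "convex {1/2::real..}" by simp
next
  fix q :: real assume "q \<in> {1/2..}"
  hence q: "q > 0" by simp
  hence S: "SS (q * s) > 0" using SS_pos assms by simp
  show "((\<lambda>q. ln (SS (q * s)) - ln q - ln (SS s) - 2*q*(q-1)*ln (CC s / 2)) has_real_derivative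
     s * CC(q * s)/SS(q * s) - 1/q - (4*q-2)*ln (CC s / 2)) (at q)" by (rule G1_deriv[OF q S])
  show "((\<lambda>q. s * CC(q * s)/SS(q * s) - 1/q - (4*q-2)*ln (CC s / 2)) has_real_derivative
     1/q^2 - 4 * s^2 / (SS (q * s))^2 - 4 * ln (CC s / 2)) (at q)" by (rule G2_deriv[OF q S])
  show "1/q^2 - 4 * s^2 / (SS (q * s))^2 - 4 * ln (CC s / 2) \<le> 0" using G2_le assms \<open>q \<in> _\<close> by simp
qed

lemma core: assumes s: "s > 0"
  shows "1/2 \<le> q \<Longrightarrow> q \<le> 1 \<Longrightarrow> (CC s / 2) powr (2*q*(q-1)) \<le> SS (q * s) / (q * SS s)"
    and "q \<ge> 1 \<Longrightarrow> SS (q * s) / (q * SS s) \<le> (CC s / 2) powr (2*q*(q-1))"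
proof -
  define c where "c = CC s / 2"
  have c1: "c \<ge> 1" using CC_ge2[of s] by (simp add: c_def)
  define G where "G = (\<lambda>q. ln (SS (q * s)) - ln q - ln (SS s) - 2*q*(q-1)*ln (CC s / 2))"
  have conc: "concave_on {1/2..} G" unfolding G_def by (rule G_concave[OF s])
  have G1: "G 1 = 0" by (simp add: G_def)
  have Gh: "G (1/2) \<ge> 0"
  proof -
    have Sh: "SS (s/2) > 0" using SS_pos s by simp
    have Ch: "CC (s/2) > 0" using CC_ge2[of "s/2"] by simp
    have split: "SS s = SS (s/2) * CC (s/2)"
      by (simp add: SS_def CC_def algebra_simps flip: exp_add)
    have sq: "CC (s/2) ^ 2 = CC s + 2"
      by (simp add: CC_def power2_eq_square algebra_simps flip: exp_add)
    have "(CC (s/2) / 2) ^ 2 \<le> c" using sq CC_ge2[of s] by (simp add: c_def power_divide)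
    hence "ln ((CC (s/2) / 2) ^ 2) \<le> ln c" using Ch c1 by (subst ln_le_cancel_iff) auto
    hence L: "2 * ln (CC (s/2) / 2) \<le> ln c" using Ch by (simp add: ln_realpow)
    have "G (1/2) = ln (SS (s/2)) - ln (1/2) - ln (SS (s/2) * CC (s/2)) + ln c / 2"
      by (simp add: G_def split c_def algebra_simps)
    also have "\<dots> = ln c / 2 - ln (CC (s/2) / 2)"
      using Sh Ch by (simp add: ln_mult ln_div)
    finally show ?thesis using L by simp
  qed
  have key: "G q = ln (SS (q * s) / (q * SS s)) - ln ((CC s / 2) powr (2*q*(q-1)))" if "q > 0" for q
  proof -
    have p: "SS (q * s) > 0" "SS s > 0" using that s SS_pos by auto
    have e1: "ln (SS (q * s) / (q * SS s)) = ln (SS (q * s)) - (ln q + ln (SS s))"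
      using p that by (simp add: ln_div ln_mult)
    have e2: "ln ((CC s / 2) powr (2*q*(q-1))) = 2*q*(q-1) * ln (CC s / 2)"
      using c1 by (simp add: ln_powr c_def)
    show ?thesis unfolding e1 e2 G_def by simp
  qed
  have tr: "A \<le> B" if "ln A \<le> ln B" "A > 0" "B > 0" for A B :: real
    using that by simp
  have Bpos: "SS (q * s) / (q * SS s) > 0" if "q > 0" for q
    using that s SS_pos by simp
  {
    assume q: "1/2 \<le> q" "q \<le> 1"
    define t where "t = 2*q - 1"
    have "G ((1 - t) *\<^sub>R (1/2) + t *\<^sub>R 1) \<ge> (1 - t) * G (1/2) + t * G 1"
      by (rule concave_onD[OF conc]) (use q in \<open>auto simp: t_def\<close>)
    moreover have "(1 - t) *\<^sub>R (1/2) + t *\<^sub>R 1 = q" by (simp add: t_def algebra_simps)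
    moreover have "(1 - t) * G (1/2) + t * G 1 \<ge> 0" using Gh G1 q by (simp add: t_def)
    ultimately have "G q \<ge> 0" by simp
    hence "ln ((CC s / 2) powr (2*q*(q-1))) \<le> ln (SS (q * s) / (q * SS s))" using key[of q] q by simp
    moreover have "(CC s / 2) powr (2*q*(q-1)) > 0" using c1 by (simp add: c_def)
    moreover have "SS (q * s) / (q * SS s) > 0" using Bpos[of q] q by simp
    ultimately show "(CC s / 2) powr (2*q*(q-1)) \<le> SS (q * s) / (q * SS s)"
      using ln_le_cancel_iff by blast
  }
  {
    assume q: "q \<ge> 1"
    show "SS (q * s) / (q * SS s) \<le> (CC s / 2) powr (2*q*(q-1))"
    proof (cases "q = 1")
      case True thus ?thesis using SS_pos[OF s] CC_ge2[of s] by simp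
    next
      case False
      hence q1: "q > 1" using q by simp
      define t where "t = 1 / (2*q - 1)"
      have t: "0 < t" "t < 1" using q1 by (auto simp: t_def field_simps)
      have "G ((1 - t) *\<^sub>R (1/2) + t *\<^sub>R q) \<ge> (1 - t) * G (1/2) + t * G q"
        by (rule concave_onD[OF conc]) (use q t in \<open>auto\<close>)
      moreover have "(1 - t) *\<^sub>R (1/2) + t *\<^sub>R q = 1"
      proof -
        have "(1 - t) *\<^sub>R (1/2) + t *\<^sub>R q = 1/2 + t * (2*q - 1) / 2" by (simp add: field_simps)
        also have "t * (2*q - 1) = 1" using q1 by (simp add: t_def)
        finally show ?thesis by simp
      qed
      ultimately have "0 \<ge> (1 - t) * G (1/2) + t * G q" using G1 by simp
      moreover have "(1 - t) * G (1/2) \<ge> 0" using t Gh by simp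
      ultimately have "t * G q \<le> 0" by linarith
      hence "G q \<le> 0" using t by (simp add: mult_le_0_iff)
      hence "ln (SS (q * s) / (q * SS s)) \<le> ln ((CC s / 2) powr (2*q*(q-1)))" using key[of q] q1 by simp
      moreover have "(CC s / 2) powr (2*q*(q-1)) > 0" using c1 by (simp add: c_def)
      moreover have "SS (q * s) / (q * SS s) > 0" using Bpos[of q] q1 by simp
      ultimately show ?thesis using ln_le_cancel_iff by blast
    qed
  }
qed

lemma SS_pos_iff: "SS w > 0 \<longleftrightarrow> w > 0"
  using SS_pos SS_neg[of w] by (cases "w > 0") (auto simp: SS_def)

lemma SS_neg_iff: "SS w < 0 \<longleftrightarrow> w < 0"
  using SS_neg SS_pos[of w] by (cases "w < 0") (auto simp: SS_def)

lemma SS_nz: assumes "w \<noteq> 0" shows "SS w \<noteq> 0"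
proof (cases "w > 0")
  case True thus ?thesis using SS_pos[of w] by simp
next
  case False hence "w < 0" using assms by simp
  thus ?thesis using SS_neg[of w] by simp
qed

lemma Bpos_gen: assumes "u \<noteq> 0" "v \<noteq> 0" shows "SS (u * v) / (u * SS v) > 0"
  using assms unfolding zero_less_divide_iff zero_less_mult_iff mult_less_0_iff SS_pos_iff SS_neg_iff
  by auto

lemma B_abs: "SS (q * t) / (q * SS t) = SS (q * \<bar>t\<bar>) / (q * SS \<bar>t\<bar>)"
proof (cases "t \<ge> 0")
  case False
  hence "\<bar>t\<bar> = - t" by simp
  thus ?thesis by (simp add: SS_odd)
qed simp

lemma CC_abs: "CC t = CC \<bar>t\<bar>"
proof (cases "t \<ge> 0")
  case False
  hence "\<bar>t\<bar> = - t" by simp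
  thus ?thesis by (simp add: CC_even)
qed simp

lemma core1: "t \<noteq> 0 \<Longrightarrow> 1/2 \<le> q \<Longrightarrow> q \<le> 1 \<Longrightarrow> (CC t / 2) powr (2*q*(q-1)) \<le> SS (q * t) / (q * SS t)"
  apply (subst B_abs, subst CC_abs)
  using core(1)[of "\<bar>t\<bar>" q] by simp

lemma core2: "t \<noteq> 0 \<Longrightarrow> q \<ge> 1 \<Longrightarrow> SS (q * t) / (q * SS t) \<le> (CC t / 2) powr (2*q*(q-1))"
  apply (subst B_abs, subst CC_abs)
  using core(2)[of "\<bar>t\<bar>" q] by simp

lemma core3: assumes "t \<noteq> 0" "r > 0" shows "SS (r * t) / (r * SS t) \<le> (CC t / 2) powr (2*r*(r+1))"
proof -
  have c1: "CC t / 2 \<ge> 1" using CC_ge2[of t] by simp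
  show ?thesis
  proof (cases "r \<ge> 1")
    case True
    have "SS (r * t) / (r * SS t) \<le> (CC t / 2) powr (2*r*(r-1))" by (rule core2[OF assms(1) True])
    also have "\<dots> \<le> (CC t / 2) powr (2*r*(r+1))"
      using c1 assms by (intro powr_mono) auto
    finally show ?thesis .
  next
    case False
    define s where "s = \<bar>t\<bar>"
    have s: "s > 0" using assms by (simp add: s_def)
    have "SS (r * s) \<le> r * SS s" using SS_small[of s r] s assms False by simp
    hence "SS (r * s) / (r * SS s) \<le> 1" using SS_pos[OF s] assms by (simp add: divide_le_eq_1)
    also have "1 \<le> (CC t / 2) powr (2*r*(r+1))"
      using c1 assms by (intro ge_one_powr_ge_zero) auto
    finally show ?thesis by (subst B_abs) (simp add: s_def)
  qed
qed

lemma main_generic: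
  assumes x: "x > 0" "x \<noteq> 1" and p: "p \<noteq> 0"
  defines "t \<equiv> ln x / 2"
  shows "t \<noteq> 0"
    and "Ghat p x = exp t * (p * SS t / SS (p * t))"
    and "\<And>a. K x powr a = (CC t / 2) powr (2 * a)"
    and "p \<noteq> 1 \<Longrightarrow> W p x = exp t * (p * SS t / SS (p * t)) / (SS ((1-p) * t) / ((1-p) * SS t))"
    and "W 1 x = exp t * (SS t / (2 * t))"
proof -
  show t0: "t \<noteq> 0" using x by (simp add: t_def)
  have pw: "x powr a = exp (2 * a * t)" for a using x by (simp add: powr_def t_def)
  have df: "exp (2 * a * t) - 1 = exp (a * t) * SS (a * t)" for a
    by (simp add: SS_def algebra_simps flip: exp_add)
  have x1: "x - 1 = exp t * SS t" using pw[of 1] df[of 1] x by simp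
  have xe: "x = exp (2 * t)" using pw[of 1] x by simp
  have Snz: "SS (p * t) \<noteq> 0" using t0 p by (intro SS_nz) simp
  have Snz1: "SS t \<noteq> 0" using t0 by (intro SS_nz)
  have "Ghat p x = p * x powr (p / 2) * (x - 1) / (x powr p - 1)" using x p by (simp add: Ghat_def)
  also have "\<dots> = p * exp (p * t) * (exp t * SS t) / (exp (p * t) * SS (p * t))"
    using pw[of "p/2"] pw[of p] df[of p] x1 by simp
  also have "\<dots> = exp t * (p * SS t / SS (p * t))" using Snz by (simp add: field_simps)
  finally show "Ghat p x = exp t * (p * SS t / SS (p * t))" .
  have Kx: "K x = (CC t / 2) ^ 2"
  proof -
    have "x + 1 = exp t * CC t" using xe by (simp add: CC_def algebra_simps flip: exp_add)
    thus ?thesis using xe by (simp add: K_def power2_eq_square field_simps flip: exp_add)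
  qed
  have cpos: "CC t / 2 > 0" using CC_ge2[of t] by simp
  show "K x powr a = (CC t / 2) powr (2 * a)" for a
  proof -
    have "(CC t / 2) ^ 2 = (CC t / 2) powr 2" using cpos by (simp add: powr_numeral)
    hence "K x powr a = ((CC t / 2) powr 2) powr a" using Kx by simp
    also have "\<dots> = (CC t / 2) powr (2 * a)" by (simp only: powr_powr)
    finally show ?thesis .
  qed
  {
    assume p1: "p \<noteq> 1"
    have Snz2: "SS ((1-p) * t) \<noteq> 0" using t0 p1 by (intro SS_nz) simp
    have ee: "exp (p * t) * exp ((1-p) * t) = exp t" by (simp add: algebra_simps flip: exp_add)
    have "W p x = p * (1 - p) * (x - 1)^2 / ((x powr p - 1) * (x powr (1 - p) - 1))"
      using x p p1 by (simp add: W_def)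
    also have "\<dots> = p * (1 - p) * (exp t * SS t)^2 / ((exp (p * t) * SS (p * t)) * (exp ((1-p) * t) * SS ((1-p) * t)))"
      using pw[of p] df[of p] pw[of "1-p"] df[of "1-p"] x1 by simp
    also have "p * (1 - p) * (exp t * SS t)^2 / ((exp (p * t) * SS (p * t)) * (exp ((1-p) * t) * SS ((1-p) * t)))
        = p * (1 - p) * (exp t * SS t)^2 / (exp t * (SS (p * t) * SS ((1-p) * t)))"
      using ee by (simp add: algebra_simps)
    also have "\<dots> = exp t * (p * SS t / SS (p * t)) / (SS ((1-p) * t) / ((1-p) * SS t))"
      using Snz Snz1 Snz2 p1 by (simp add: field_simps power2_eq_square)
    finally show "W p x = exp t * (p * SS t / SS (p * t)) / (SS ((1-p) * t) / ((1-p) * SS t))" .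
  }
  have "W 1 x = (x - 1) / ln x" using x by (simp add: W_def)
  also have "\<dots> = exp t * (SS t / (2 * t))" using x1 by (simp add: t_def)
  finally show "W 1 x = exp t * (SS t / (2 * t))" .
qed

theorem theorem3p3:
  fixes x p :: real
  assumes "x > 0"
  shows "(0 \<le> p \<and> p \<le> 1/2 \<longrightarrow> Ghat p x \<ge> K x powr (- p * (1 - p)) * W p x)
       \<and> ((p \<le> 0 \<or> p \<ge> 1) \<longrightarrow> Ghat p x \<le> K x powr (- p * (1 - p)) * W p x)"
proof (cases "x = 1")
  case True thus ?thesis by (simp add: Ghat_def W_def K_def)
next
  case x1: False
  show ?thesis
  proof (cases "p = 0")
    case True
    have "K x > 0" using assms by (simp add: K_def)
    thus ?thesis using True by (simp add: Ghat_def W_def)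
  next
    case p0: False
    define t where "t = ln x / 2"
    note M = main_generic[OF assms x1 p0, folded t_def]
    have t0: "t \<noteq> 0" by (rule M(1))
    define g where "g = p * SS t / SS (p * t)"
    have gpos: "g > 0"
    proof -
      have "SS (p * t) / (p * SS t) > 0" by (rule Bpos_gen[OF p0 t0])
      hence "inverse (SS (p * t) / (p * SS t)) > 0" by (rule positive_imp_inverse_positive)
      thus ?thesis unfolding g_def by (simp only: inverse_divide)
    qed
    define E where "E = exp t * g"
    have Epos: "E > 0" using gpos by (simp add: E_def)
    have G: "Ghat p x = E" using M(2) by (simp add: E_def g_def)
    have Kp: "K x powr (- p * (1 - p)) = (CC t / 2) powr (2 * (1-p) * ((1-p) - 1))"
      using M(3)[of "- p * (1 - p)"] by (simp add: algebra_simps)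
    define C where "C = (CC t / 2) powr (2 * (1-p) * ((1-p) - 1))"
    show ?thesis
    proof (cases "p = 1")
      case True
      have "1 \<le> SS t / (2 * t)"
      proof (cases "t > 0")
        case True thus ?thesis using SS_ge[of t] by simp
      next
        case False
        hence "t < 0" using t0 by simp
        thus ?thesis using SS_ge[of "-t"] by (simp add: SS_odd divide_simps)
      qed
      hence "exp t * 1 \<le> exp t * (SS t / (2 * t))" by (intro mult_left_mono) auto
      hence "exp t \<le> exp t * (SS t / (2 * t))" by simp
      moreover have "Ghat p x = exp t" using M(2) True t0 SS_nz by simp
      moreover have "K x > 0" using assms by (simp add: K_def)
      ultimately show ?thesis using True M(5) by simp
    next
      case p1: False
      define B where "B = SS ((1-p) * t) / ((1-p) * SS t)"
      have Bpos: "B > 0" unfolding B_def using p1 t0 by (intro Bpos_gen) auto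
      have W: "W p x = E / B" using M(4)[OF p1] by (simp add: E_def g_def B_def)
      have rhs: "K x powr (- p * (1 - p)) * W p x = E * (C / B)" unfolding Kp W C_def[symmetric] by simp
      have "(0 \<le> p \<and> p \<le> 1/2 \<longrightarrow> C \<le> B) \<and> ((p \<le> 0 \<or> p \<ge> 1) \<longrightarrow> B \<le> C)"
      proof (intro conjI impI)
        assume "0 \<le> p \<and> p \<le> 1/2"
        thus "C \<le> B" unfolding C_def B_def using core1[OF t0, of "1-p"] by simp
      next
        assume "p \<le> 0 \<or> p \<ge> 1"
        thus "B \<le> C"
        proof
          assume "p \<le> 0"
          thus "B \<le> C" unfolding C_def B_def using core2[OF t0, of "1-p"] by simp
        next
          assume "p \<ge> 1"
          hence r: "p - 1 > 0" using p1 by simp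
          have "B = SS ((p-1) * t) / ((p-1) * SS t)"
          proof -
            have e1: "(1-p) * t = - ((p-1) * t)" "(1-p) * SS t = - ((p-1) * SS t)" by (simp_all add: algebra_simps)
            have "B = (- SS ((p-1) * t)) / (- ((p-1) * SS t))"
              unfolding B_def e1 SS_odd ..
            thus ?thesis by (simp only: minus_divide_divide)
          qed
          also have "\<dots> \<le> (CC t / 2) powr (2*(p-1)*((p-1)+1))" by (rule core3[OF t0 r])
          also have "\<dots> = C" by (simp add: C_def algebra_simps)
          finally show "B \<le> C" .
        qed
      qed
      moreover have "C \<le> B \<longleftrightarrow> C / B \<le> 1" using Bpos by (simp add: divide_le_eq_1)
      moreover have "B \<le> C \<longleftrightarrow> C / B \<ge> 1" using Bpos by (simp add: le_divide_eq_1)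
      moreover have "C / B \<le> 1 \<Longrightarrow> E * (C / B) \<le> E"
        using mult_left_mono[of "C / B" 1 E] Epos by simp
      moreover have "1 \<le> C / B \<Longrightarrow> E \<le> E * (C / B)"
        using mult_left_mono[of 1 "C / B" E] Epos by simp
      ultimately show ?thesis unfolding G rhs by blast
    qed
  qed
qed

end
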